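(* Let $\mathcal{V} = \{(x,y) \in \mathbb{C}^2 : e^{-x} + e^{-y} - 1 = 0\}$. If $(a,b) \in \mathcal{V} \cap (0,1)^2$, then $(a,b)$ is strictly minimal on $\mathcal{V}$, i.e. the closed bidisk $\{(z,w)\in\mathbb{C}^2 : |z|\le a,\ |w| \le b\}$ intersects $\mathcal{V}$ only at the point $(a,b)$. *)

theory Defs
  imports Complex_Main
begin

definition V :: "(complex \<times> complex) set" where
  "V = {(x, y). exp (- x) + exp (- y) - 1 = 0}"

end

theory Submission
  imports Defs "HOL-Analysis.Analysis"
begin

lemma exp_tail_sums:
  fixes z :: "'a::{real_normed_field,banach}"
  shows "(\<lambda>n. z^(n+3) / fact (n+3)) sums (exp z - (1 + z + z^2/2))"
proof -
  have "(\<lambda>n. z^n / fact n) sums exp z"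
    using exp_converges[of z] by (simp add: scaleR_conv_of_real divide_inverse mult.commute)
  then have "(\<lambda>n. z^(n+3) / fact (n+3)) sums (exp z - (\<Sum>i<3. z^i / fact i))"
    by (subst sums_iff_shift) simp
  moreover have "(\<Sum>i<3. z^i / fact i) = 1 + z + z^2/2"
    by (simp add: eval_nat_numeral fact_numeral)
  ultimately show ?thesis by simp
qed

lemma exp_tail_bound:
  fixes z :: complex
  shows "cmod (exp z - (1 + z + z^2/2)) \<le> exp (cmod z) - (1 + cmod z + (cmod z)^2/2)"
proof (rule norm_sums_le[OF exp_tail_sums exp_tail_sums])
  fix n
  show "cmod (z ^ (n + 3) / fact (n + 3)) \<le> cmod z ^ (n + 3) / fact (n + 3)"
    by (simp add: norm_divide norm_power)
qed

lemma exp_minus1_bound: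
  fixes z :: complex
  shows "cmod (exp z - 1) \<le> cmod z * cmod (1 + z/2) + (exp (cmod z) - (1 + cmod z + (cmod z)^2/2))"
proof -
  have "exp z - 1 = z * (1 + z/2) + (exp z - (1 + z + z^2/2))"
    by (simp add: algebra_simps power2_eq_square)
  then have "cmod (exp z - 1) \<le> cmod (z * (1 + z/2)) + cmod (exp z - (1 + z + z^2/2))"
    by (metis norm_triangle_ineq)
  also have "\<dots> \<le> cmod z * cmod (1 + z/2) + (exp (cmod z) - (1 + cmod z + (cmod z)^2/2))"
    using exp_tail_bound[of z] by (simp add: norm_mult)
  finally show ?thesis .
qed

lemma exp_minus1_le:
  fixes z :: complex
  shows "cmod (exp z - 1) \<le> exp (cmod z) - 1"
proof -
  have "cmod (1 + z/2) \<le> 1 + cmod z / 2"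
    using norm_triangle_ineq[of 1 "z/2"] by (simp add: norm_divide)
  then have "cmod z * cmod (1 + z/2) \<le> cmod z * (1 + cmod z / 2)"
    by (simp add: mult_left_mono)
  then show ?thesis using exp_minus1_bound[of z]
    by (simp add: algebra_simps power2_eq_square)
qed

lemma V_prod:
  assumes "exp (- x) + exp (- y) - 1 = (0::complex)"
  shows "(exp x - 1) * (exp y - 1) = 1"
proof -
  have "exp x * exp y * (exp (- x) + exp (- y) - 1) = 0" using assms by simp
  moreover have "exp x * exp y * (exp (- x) + exp (- y) - 1) = exp y * (exp x * exp (-x)) + exp x * (exp y * exp (-y)) - exp x * exp y"
    by (simp add: algebra_simps)
  moreover have "exp x * exp (-x) = 1" "exp y * exp (-y) = 1" by (simp_all add: exp_minus_inverse)
  ultimately have "exp y + exp x - exp x * exp y = 0" by simp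
  then show ?thesis by (simp add: algebra_simps)
qed

theorem lemma2p4:
  fixes a b :: real
  assumes "(complex_of_real a, complex_of_real b) \<in> V"
    and "0 < a" and "a < 1" and "0 < b" and "b < 1"
  shows "{(z, w). cmod z \<le> a \<and> cmod w \<le> b} \<inter> V = {(complex_of_real a, complex_of_real b)}"
proof -
  have ab: "(exp a - 1) * (exp b - 1) = 1"
  proof -
    have "(exp (complex_of_real a) - 1) * (exp (complex_of_real b) - 1) = 1"
      using assms(1) V_prod by (simp add: V_def)
    then have "complex_of_real ((exp a - 1) * (exp b - 1)) = complex_of_real 1"
      by (simp add: exp_of_real[symmetric])
    then show ?thesis using of_real_eq_iff by blast
  qed
  have ea: "exp a - 1 > 0" "exp b - 1 > 0" using assms by auto
  have main: "z = complex_of_real a" if hz: "cmod z \<le> a" and hw: "cmod w \<le> b"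
     and p: "(exp z - 1) * (exp w - 1) = 1" and ab: "(exp a - 1) * (exp b - 1) = 1"
     and ea: "exp a - 1 > 0" "exp b - 1 > 0" and a0: "a > 0"
     for z w :: complex and a b :: real
  proof -
    have A: "cmod (exp z - 1) \<le> exp a - 1"
      using exp_minus1_le[of z] hz by (meson diff_right_mono exp_le_cancel_iff order_trans)
    have B: "cmod (exp w - 1) \<le> exp b - 1"
      using exp_minus1_le[of w] hw by (meson diff_right_mono exp_le_cancel_iff order_trans)
    have one: "cmod (exp z - 1) * cmod (exp w - 1) = 1"
      using p by (metis norm_mult norm_one)
    have Bpos: "cmod (exp w - 1) > 0" using one by (metis mult_zero_right norm_ge_zero order_le_less zero_neq_one)
    have eqA: "cmod (exp z - 1) = exp a - 1"
    proof (rule ccontr)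
      assume "cmod (exp z - 1) \<noteq> exp a - 1"
      then have "cmod (exp z - 1) < exp a - 1" using A by simp
      then have "cmod (exp z - 1) * cmod (exp w - 1) < (exp a - 1) * cmod (exp w - 1)"
        using Bpos by simp
      also have "\<dots> \<le> (exp a - 1) * (exp b - 1)" using B ea by simp
      finally show False using one ab by simp
    qed
    have r: "cmod z = a"
    proof (rule ccontr)
      assume "cmod z \<noteq> a"
      then have "cmod z < a" using hz by simp
      then have "exp (cmod z) - 1 < exp a - 1" by simp
      then show False using exp_minus1_le[of z] eqA by simp
    qed
    have "cmod z * cmod (1 + z/2) \<ge> cmod z * (1 + cmod z / 2)"
      using exp_minus1_bound[of z] eqA r by (simp add: algebra_simps power2_eq_square)
    then have "cmod (1 + z/2) \<ge> 1 + cmod z / 2" using r a0 by simp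
    moreover have "cmod (1 + z/2) \<le> 1 + cmod z / 2"
      using norm_triangle_ineq[of 1 "z/2"] by (simp add: norm_divide)
    ultimately have "cmod (1 + z/2) = norm (1::complex) + cmod (z/2)"
      by (simp add: norm_divide)
    then have "norm (1::complex) *\<^sub>R (z/2) = cmod (z/2) *\<^sub>R 1"
      using norm_triangle_eq by blast
    then have "z = complex_of_real (cmod z)"
      by (simp add: norm_divide scaleR_conv_of_real)
    then show ?thesis using r by simp
  qed
  show ?thesis
  proof
    show "{(z, w). cmod z \<le> a \<and> cmod w \<le> b} \<inter> V \<subseteq> {(complex_of_real a, complex_of_real b)}"
    proof clarify
      fix z w assume hz: "cmod z \<le> a" and hw: "cmod w \<le> b" and v: "(z, w) \<in> V"
      have p: "(exp z - 1) * (exp w - 1) = 1" using v V_prod by (simp add: V_def)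
      have p': "(exp w - 1) * (exp z - 1) = 1" using p by (simp add: mult.commute)
      have ab': "(exp b - 1) * (exp a - 1) = 1" using ab by (simp add: mult.commute)
      show "z = complex_of_real a \<and> w = complex_of_real b"
        using main[OF hz hw p ab ea assms(2)] main[OF hw hz p' ab' ea(2) ea(1) assms(4)] by simp
    qed
    show "{(complex_of_real a, complex_of_real b)} \<subseteq> {(z, w). cmod z \<le> a \<and> cmod w \<le> b} \<inter> V"
      using assms by auto
  qed
qed

end
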